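(* Let $U,V\subset\mathcal{A}_0$ be compact sets such that $U^T$ and $V^T$ are complete. Then the following are equivalent: (a) $U^{**}=V^{**}$; (b) $U^T=V^T$; (c) $U^*=V^*$.
   Context: $D=\{z:|z|<1\}$, $\overline D$ its closure. $\mathcal{A}$ is the space of functions $f(z)=\sum_{k\ge0}a_k(f)z^k$ analytic in $D$, with the topology of locally uniform convergence; $\mathcal{A}_0=\{f\in\mathcal{A}: a_0(f)=1\}$. $\mathcal{A}(\overline D)$ is the set of functions analytic in some disk $\{|z|<R\}$ with $R>1$, and $\mathcal{A}_0(\overline D)=\{g\in\mathcal{A}(\overline D):a_0(g)=1\}$. The Hadamard product is $(f*g)(z)=\sum_{k\ge0}a_k(f)a_k(g)z^k$. For $V\subset\mathcal{A}_0$, $V^*=\{g\in\mathcal{A}_0:(f*g)(z)\ne0 \ \forall z\in D,\ \forall f\in V\}$, $V^{**}=(V^* )^*$, and $V^T=\{g\in\mathcal{A}_0(\overline D): (f*g)(1)\ne0 \ \forall f\in V\}$. For $x\in\overline D$, $(P_xf)(z)=f(xz)$; a set $W$ is complete if $P_xf\in W$ for all $f\in W$, $x\in\overline D$. *)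

theory Defs
  imports "HOL-Complex_Analysis.Complex_Analysis"
begin

text \<open>Functions are represented as maps complex => complex; only their values on the
relevant disk matter.  The disk D is ball 0 1, its closure cball 0 1.\<close>

definition calA :: "(complex \<Rightarrow> complex) set" where
  "calA = {f. f holomorphic_on ball 0 1}"

definition calA0 :: "(complex \<Rightarrow> complex) set" where
  "calA0 = {f \<in> calA. f 0 = 1}"

definition coeff_a :: "nat \<Rightarrow> (complex \<Rightarrow> complex) \<Rightarrow> complex" where
  "coeff_a k f = (deriv ^^ k) f 0 / of_nat (fact k)"

definition calA_cl :: "(complex \<Rightarrow> complex) set" where
  "calA_cl = {g. \<exists>R>1. g holomorphic_on ball 0 R}"

definition calA0_cl :: "(complex \<Rightarrow> complex) set" where
  "calA0_cl = {g \<in> calA_cl. g 0 = 1}"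

definition hadamard :: "(complex \<Rightarrow> complex) \<Rightarrow> (complex \<Rightarrow> complex) \<Rightarrow> complex \<Rightarrow> complex" where
  "hadamard f g = (\<lambda>z. \<Sum>k. coeff_a k f * coeff_a k g * z ^ k)"

definition dual :: "(complex \<Rightarrow> complex) set \<Rightarrow> (complex \<Rightarrow> complex) set" where
  "dual V = {g \<in> calA0. \<forall>f\<in>V. \<forall>z\<in>ball 0 1. hadamard f g z \<noteq> 0}"

definition dualT :: "(complex \<Rightarrow> complex) set \<Rightarrow> (complex \<Rightarrow> complex) set" where
  "dualT V = {g \<in> calA0_cl. \<forall>f\<in>V. hadamard f g 1 \<noteq> 0}"

definition Pop :: "complex \<Rightarrow> (complex \<Rightarrow> complex) \<Rightarrow> complex \<Rightarrow> complex" where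
  "Pop x f = (\<lambda>z. f (x * z))"

definition complete_set :: "(complex \<Rightarrow> complex) set \<Rightarrow> bool" where
  "complete_set W \<longleftrightarrow> (\<forall>f\<in>W. \<forall>x\<in>cball 0 1. Pop x f \<in> W)"

definition lu_converges :: "(nat \<Rightarrow> complex \<Rightarrow> complex) \<Rightarrow> (complex \<Rightarrow> complex) \<Rightarrow> bool" where
  "lu_converges F g \<longleftrightarrow>
     (\<forall>K. compact K \<and> K \<subseteq> ball 0 1 \<longrightarrow> uniform_limit K F g sequentially)"

text \<open>Compactness in the (metrizable) topology of locally uniform convergence on D,
expressed as sequential compactness.\<close>
definition lu_compact :: "(complex \<Rightarrow> complex) set \<Rightarrow> bool" where
  "lu_compact U \<longleftrightarrow>
     (\<forall>F::nat \<Rightarrow> complex \<Rightarrow> complex. (\<forall>n. F n \<in> U) \<longrightarrow>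
        (\<exists>(r::nat\<Rightarrow>nat) g. strict_mono r \<and> g \<in> U \<and> lu_converges (F \<circ> r) g))"

end

theory Submission
  imports Defs
begin



lemma higher_deriv_Pop:
  fixes g :: "complex \<Rightarrow> complex"
  assumes hol: "g holomorphic_on ball 0 \<rho>"
  shows "y * z \<in> ball 0 \<rho> \<Longrightarrow> (deriv ^^ k) (Pop y g) z = y^k * (deriv ^^ k) g (y * z)"
proof (induction k arbitrary: z)
  case 0
  then show ?case by (simp add: Pop_def)
next
  case (Suc k z)
  define T where "T = (\<lambda>w. y * w) -` ball 0 \<rho>"
  have oT: "open T" unfolding T_def
    by (intro continuous_open_vimage) (auto intro!: continuous_intros)
  have zT: "z \<in> T" using Suc.prems by (simp add: T_def)
  have ev: "eventually (\<lambda>w. (deriv ^^ k) (Pop y g) w = y^k * (deriv ^^ k) g (y * w)) (nhds z)"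
    using eventually_nhds_in_open[OF oT zT] by eventually_elim (use Suc.IH T_def in auto)
  have hk: "(deriv ^^ k) g holomorphic_on ball 0 \<rho>"
    using holomorphic_higher_deriv[OF hol] by simp
  have d1: "((deriv ^^ k) g has_field_derivative deriv ((deriv ^^ k) g) (y*z)) (at (y*z))"
    using holomorphic_derivI[OF hk _ Suc.prems] by simp
  have d2: "((\<lambda>w. y^k * (deriv ^^ k) g (y * w)) has_field_derivative
       y^k * (deriv ((deriv ^^ k) g) (y*z) * y)) (at z)"
  proof -
    have d3: "((\<lambda>w. y*w) has_field_derivative y) (at z)" by (auto intro!: derivative_eq_intros)
    have "((\<lambda>w. (deriv ^^ k) g (y * w)) has_field_derivative deriv ((deriv ^^ k) g) (y*z) * y) (at z)"
      using DERIV_chain2[of "(deriv ^^ k) g" _ "\<lambda>w. y*w" z, OF _ d3] d1 by simp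
    then show ?thesis by (rule DERIV_cmult)
  qed
  have "(deriv ^^ Suc k) (Pop y g) z = deriv ((deriv ^^ k) (Pop y g)) z" by simp
  also have "\<dots> = deriv (\<lambda>w. y^k * (deriv ^^ k) g (y * w)) z"
    by (rule deriv_cong_ev[OF ev refl])
  also have "\<dots> = y^k * (deriv ((deriv ^^ k) g) (y*z) * y)"
    using d2 by (rule DERIV_imp_deriv)
  finally show ?case by simp
qed

lemma coeff_Pop:
  assumes "g holomorphic_on ball 0 \<rho>" "\<rho> > 0"
  shows "coeff_a k (Pop y g) = y^k * coeff_a k g"
  using higher_deriv_Pop[OF assms(1), of y 0 k] assms(2) by (simp add: coeff_a_def)

lemma hadamard_Pop:
  assumes "g holomorphic_on ball 0 \<rho>" "\<rho> > 0"
  shows "hadamard f (Pop y g) z = hadamard f g (y * z)"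
  unfolding hadamard_def coeff_Pop[OF assms] by (simp add: power_mult_distrib mult_ac)

lemma hadamard_commute: "hadamard f g = hadamard g f"
  unfolding hadamard_def by (simp add: mult_ac)



lemma coeff_bound:
  assumes hol: "f holomorphic_on ball 0 R0" and s: "0 < s" "s < R0"
    and B: "\<And>z. norm z = s \<Longrightarrow> norm (f z) \<le> B"
  shows "norm (coeff_a k f) \<le> B / s^k"
proof -
  have h1: "f holomorphic_on ball 0 s" using s by (intro holomorphic_on_subset[OF hol]) auto
  have "continuous_on (cball 0 s) f"
    using s by (intro continuous_on_subset[OF holomorphic_on_imp_continuous_on[OF hol]]) auto
  from Cauchy_inequality[OF h1 this s(1), of B k] B
  have "norm ((deriv ^^ k) f 0) \<le> fact k * B / s^k" by simp
  then show ?thesis unfolding coeff_a_def norm_divide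
    by (simp add: field_simps)
qed

lemma had_bound:
  assumes holg: "g holomorphic_on ball 0 R" and \<rho>: "0 < \<rho>" "\<rho> < R"
    and Bg: "\<And>z. norm z = \<rho> \<Longrightarrow> norm (g z) \<le> Bg"
    and holh: "h holomorphic_on ball 0 1" and s: "0 < s" "s < 1"
    and Bh: "\<And>z. norm z = s \<Longrightarrow> norm (h z) \<le> B"
    and t: "0 \<le> t" "t < s * \<rho>" and w: "norm w \<le> t"
  shows "summable (\<lambda>k. norm (coeff_a k h * coeff_a k g * w^k))"
    and "norm (hadamard h g w) \<le> B * Bg / (1 - t / (s * \<rho>))"
proof -
  define q where "q = t / (s * \<rho>)"
  have q: "0 \<le> q" "q < 1" using t s \<rho> by (auto simp: q_def)
  have bnd: "norm (coeff_a k h * coeff_a k g * w^k) \<le> B * Bg * q^k" for k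
  proof -
    have a: "norm (coeff_a k h) \<le> B / s^k" by (rule coeff_bound[OF holh s Bh])
    have b: "norm (coeff_a k g) \<le> Bg / \<rho>^k" by (rule coeff_bound[OF holg \<rho> Bg])
    have c: "norm (w^k) \<le> t^k" by (simp add: norm_power power_mono w)
    have "norm (coeff_a k h * coeff_a k g * w^k) = norm (coeff_a k h) * norm (coeff_a k g) * norm (w^k)"
      by (simp add: norm_mult)
    also have "\<dots> \<le> (B / s^k) * (Bg / \<rho>^k) * t^k"
    proof -
      have a0: "0 \<le> B / s^k" by (rule order_trans[OF norm_ge_zero a])
      have b0: "0 \<le> Bg / \<rho>^k" by (rule order_trans[OF norm_ge_zero b])
      show ?thesis by (intro mult_mono a b c mult_nonneg_nonneg a0 b0) auto
    qed
    also have "\<dots> = B * Bg * q^k" by (simp add: q_def power_divide power_mult_distrib field_simps)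
    finally show ?thesis .
  qed
  have sg: "summable (\<lambda>k. B * Bg * q^k)" using q by (intro summable_mult summable_geometric) auto
  show "summable (\<lambda>k. norm (coeff_a k h * coeff_a k g * w^k))"
    by (rule summable_comparison_test[OF _ sg]) (use bnd in auto)
  have "norm (hadamard h g w) \<le> (\<Sum>k. B * Bg * q^k)"
    unfolding hadamard_def by (rule norm_suminf_le[OF bnd sg])
  also have "\<dots> = B * Bg / (1 - q)" using q
    by (simp add: suminf_mult suminf_geometric)
  finally show "norm (hadamard h g w) \<le> B * Bg / (1 - t / (s * \<rho>))" by (simp add: q_def)
qed



lemma coeff_diff:
  assumes "a holomorphic_on ball 0 1" "b holomorphic_on ball 0 1"
  shows "coeff_a k (\<lambda>z. a z - b z) = coeff_a k a - coeff_a k b"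
  unfolding coeff_a_def using higher_deriv_diff[OF assms, of 0 k]
  by (simp add: diff_divide_distrib)

lemma hadamard_diff:
  assumes "a holomorphic_on ball 0 1" "b holomorphic_on ball 0 1"
    and "summable (\<lambda>k. norm (coeff_a k a * coeff_a k g * w^k))"
    and "summable (\<lambda>k. norm (coeff_a k b * coeff_a k g * w^k))"
  shows "hadamard (\<lambda>z. a z - b z) g w = hadamard a g w - hadamard b g w"
proof -
  have "hadamard a g w - hadamard b g w =
      (\<Sum>k. coeff_a k a * coeff_a k g * w^k - coeff_a k b * coeff_a k g * w^k)"
    unfolding hadamard_def
    using suminf_diff[OF summable_norm_cancel[OF assms(3)] summable_norm_cancel[OF assms(4)]] by simp
  also have "\<dots> = hadamard (\<lambda>z. a z - b z) g w"
    unfolding hadamard_def coeff_diff[OF assms(1,2)] by (simp add: algebra_simps)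
  finally show ?thesis by simp
qed

lemma sphere_bound:
  assumes "f holomorphic_on ball 0 R0" "0 < s" "s < R0"
  obtains B where "\<And>z. norm z = s \<Longrightarrow> norm (f z) \<le> B"
proof -
  have "continuous_on (sphere 0 s) f"
    using assms by (intro continuous_on_subset[OF holomorphic_on_imp_continuous_on[OF assms(1)]]) auto
  then have "bounded (f ` sphere 0 s)" by (intro compact_imp_bounded compact_continuous_image) auto
  then obtain B where "\<forall>x\<in>f ` sphere 0 s. norm x \<le> B" unfolding bounded_iff by blast
  then have "\<And>z. norm z = s \<Longrightarrow> norm (f z) \<le> B" by simp
  then show ?thesis by (rule that)
qed



lemma zero_free:
  assumes U: "U \<subseteq> calA0" "lu_compact U"
    and holg: "g holomorphic_on ball 0 R" and R: "1 < R"
    and nz: "\<forall>f\<in>U. \<forall>y\<in>cball 0 1. hadamard f g y \<noteq> 0"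
  shows "\<exists>r>1. r < R \<and> (\<forall>f\<in>U. \<forall>y\<in>ball 0 r. hadamard f g y \<noteq> 0)"
proof (rule ccontr)
  assume neg: "\<not> ?thesis"
  define \<rho> where "\<rho> = (1+R)/2"
  define s where "s = (1 + 1/\<rho>)/2"
  define t where "t = (1 + s*\<rho>)/2"
  have \<rho>: "1 < \<rho>" "\<rho> < R" using R by (auto simp: \<rho>_def)
  have s: "0 < s" "s < 1" using \<rho> by (auto simp: s_def field_simps)
  have s\<rho>: "s*\<rho> = (\<rho>+1)/2" using \<rho> by (simp add: s_def field_simps)
  have t: "1 < t" "t < s*\<rho>" "s*\<rho> < \<rho>" using \<rho> by (auto simp: t_def s\<rho>)
  have \<rho>0: "0 < \<rho>" using \<rho> by simp
  obtain Bg0 where Bg0: "\<And>z. norm z = \<rho> \<Longrightarrow> norm (g z) \<le> Bg0"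
    using sphere_bound[OF holg \<rho>0 \<rho>(2)] by blast
  define Bg where "Bg = abs Bg0 + 1"
  have Bg: "\<And>z. norm z = \<rho> \<Longrightarrow> norm (g z) \<le> Bg" using Bg0 by (force simp: Bg_def)
  have Bgpos: "Bg > 0" by (simp add: Bg_def)
  define C where "C = Bg / (1 - t/(s*\<rho>))"
  have Cpos: "C > 0" using t s \<rho> Bgpos by (auto simp: C_def field_simps)
  define rr where "rr n = 1 + (t - 1) / real (Suc n)" for n
  have rr1: "1 < rr n" for n using t by (simp add: rr_def)
  have rrt: "rr n \<le> t" for n
  proof -
    have "(t - 1) / real (Suc n) \<le> (t-1) / 1" using t by (intro divide_left_mono) auto
    then show ?thesis by (simp add: rr_def)
  qed
  have "\<exists>f\<in>U. \<exists>y\<in>ball 0 (rr n). hadamard f g y = 0" for n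
  proof -
    have "rr n < R" using rrt[of n] t \<rho> by linarith
    then show ?thesis using neg rr1[of n] by blast
  qed
  then obtain F Y where FY: "\<And>n. F n \<in> U" "\<And>n. Y n \<in> ball 0 (rr n)"
     "\<And>n. hadamard (F n) g (Y n) = 0" by metis
  from U(2) FY(1) obtain \<sigma>1 f where \<sigma>1: "strict_mono \<sigma>1" "f \<in> U" "lu_converges (F \<circ> \<sigma>1) f"
    unfolding lu_compact_def by blast
  have Ynorm: "norm (Y n) \<le> t" for n using FY(2)[of n] rrt[of n] by simp
  have "seq_compact (cball (0::complex) t)" by (intro compact_imp_seq_compact) auto
  moreover have "\<forall>n. (Y \<circ> \<sigma>1) n \<in> cball 0 t" using Ynorm by simp
  ultimately obtain y \<sigma>2 where \<sigma>2: "y \<in> cball 0 t" "strict_mono \<sigma>2" "(Y \<circ> \<sigma>1 \<circ> \<sigma>2) \<longlonglongrightarrow> y"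
    unfolding seq_compact_def by metis
  define \<sigma> where "\<sigma> = \<sigma>1 \<circ> \<sigma>2"
  have \<sigma>: "strict_mono \<sigma>" using \<sigma>1(1) \<sigma>2(2) by (simp add: \<sigma>_def strict_mono_o)
  have Y\<sigma>: "(\<lambda>j. Y (\<sigma> j)) \<longlonglongrightarrow> y" using \<sigma>2(3) by (simp add: \<sigma>_def o_def)
  have ylim: "norm y \<le> 1"
  proof -
    have a: "(\<lambda>j. norm (Y (\<sigma> j))) \<longlonglongrightarrow> norm y" by (rule tendsto_norm[OF Y\<sigma>])
    have b: "(\<lambda>j. 1 + (t-1) * inverse (real (Suc j))) \<longlonglongrightarrow> 1 + (t-1) * 0"
      by (intro tendsto_intros LIMSEQ_inverse_real_of_nat)
    have c: "norm (Y (\<sigma> j)) \<le> 1 + (t-1) * inverse (real (Suc j))" for j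
    proof -
      have "j \<le> \<sigma> j" by (rule seq_suble[OF \<sigma>])
      then have "(t - 1) / real (Suc (\<sigma> j)) \<le> (t-1) / real (Suc j)"
        using t by (intro divide_left_mono) auto
      then show ?thesis using FY(2)[of "\<sigma> j"] by (simp add: rr_def divide_inverse)
    qed
    show ?thesis using LIMSEQ_le[OF a b] c by auto
  qed
  have fhol: "f holomorphic_on ball 0 1" using \<sigma>1(2) U(1) by (auto simp: calA0_def calA_def)
  have Fhol: "F n holomorphic_on ball 0 1" for n using FY(1)[of n] U(1) by (auto simp: calA0_def calA_def)
  have sumF: "summable (\<lambda>k. norm (coeff_a k h * coeff_a k g * w^k))"
    if hh: "h holomorphic_on ball 0 1" and hw: "norm w \<le> t" for h w
  proof -
    obtain B where B: "\<And>z. norm z = s \<Longrightarrow> norm (h z) \<le> B" using sphere_bound[OF hh s] by blast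
    show ?thesis using had_bound(1)[OF holg \<rho>0 \<rho>(2) Bg hh s B _ t(2) hw] t by simp
  qed
  have contH: "isCont (hadamard f g) y"
  proof -
    have "summable (\<lambda>k. norm (coeff_a k f * coeff_a k g * (of_real t)^k))"
      using sumF[OF fhol, of "of_real t"] t by simp
    then have "summable (\<lambda>k. (coeff_a k f * coeff_a k g) * (of_real t)^k)"
      by (rule summable_norm_cancel)
    from isCont_powser[OF this, of y]
    have "isCont (\<lambda>x. \<Sum>n. coeff_a n f * coeff_a n g * x^n) y" using ylim t by simp
    then show ?thesis by (simp add: hadamard_def)
  qed
  have lim1: "(\<lambda>j. hadamard f g (Y (\<sigma> j))) \<longlonglongrightarrow> hadamard f g y"
    using isCont_tendsto_compose[OF contH Y\<sigma>] .
  have lim2: "(\<lambda>j. hadamard (F (\<sigma> j)) g (Y (\<sigma> j)) - hadamard f g (Y (\<sigma> j))) \<longlonglongrightarrow> 0"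
    unfolding tendsto_iff
  proof (intro allI impI)
    fix e :: real assume e: "e > 0"
    define e' where "e' = e / (2*C)"
    have e': "e' > 0" using e Cpos by (simp add: e'_def)
    have "compact (sphere (0::complex) s)" "sphere (0::complex) s \<subseteq> ball 0 1" using s by auto
    then have "uniform_limit (sphere 0 s) (F \<circ> \<sigma>1) f sequentially"
      using \<sigma>1(3) unfolding lu_converges_def by blast
    from uniform_limitD[OF this e']
    have "eventually (\<lambda>n. \<forall>z\<in>sphere 0 s. dist ((F \<circ> \<sigma>1) n z) (f z) < e') sequentially" .
    from eventually_subseq[OF \<sigma>2(2) this]
    have ev: "eventually (\<lambda>j. \<forall>z\<in>sphere 0 s. dist (F (\<sigma> j) z) (f z) < e') sequentially"
      by (simp add: \<sigma>_def)
    show "eventually (\<lambda>j. dist (hadamard (F (\<sigma> j)) g (Y (\<sigma> j)) - hadamard f g (Y (\<sigma> j))) 0 < e) sequentially"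
      using ev
    proof eventually_elim
      case (elim j)
      have Dhol: "(\<lambda>z. F (\<sigma> j) z - f z) holomorphic_on ball 0 1"
        using Fhol fhol by (intro holomorphic_on_diff)
      have DB: "norm (F (\<sigma> j) z - f z) \<le> e'" if "norm z = s" for z
        using elim that by (auto simp: dist_norm less_imp_le)
      have "norm (hadamard (\<lambda>z. F (\<sigma> j) z - f z) g (Y (\<sigma> j))) \<le> e' * Bg / (1 - t/(s*\<rho>))"
        by (rule had_bound(2)[OF holg \<rho>0 \<rho>(2) Bg Dhol s DB _ t(2) Ynorm]) (use t in auto)
      also have "\<dots> = e' * C" by (simp add: C_def)
      also have "\<dots> = e / 2" using Cpos by (simp add: e'_def)
      also have "\<dots> < e" using e by simp
      finally have "norm (hadamard (\<lambda>z. F (\<sigma> j) z - f z) g (Y (\<sigma> j))) < e" .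
      moreover have "hadamard (\<lambda>z. F (\<sigma> j) z - f z) g (Y (\<sigma> j)) =
          hadamard (F (\<sigma> j)) g (Y (\<sigma> j)) - hadamard f g (Y (\<sigma> j))"
        by (rule hadamard_diff[OF Fhol fhol sumF[OF Fhol Ynorm] sumF[OF fhol Ynorm]])
      ultimately show ?case by (simp add: dist_norm)
    qed
  qed
  have "(\<lambda>j. hadamard (F (\<sigma> j)) g (Y (\<sigma> j))) \<longlonglongrightarrow> 0 + hadamard f g y"
    using tendsto_add[OF lim2 lim1] by simp
  moreover have "(\<lambda>j. hadamard (F (\<sigma> j)) g (Y (\<sigma> j))) = (\<lambda>j. 0)" using FY(3) by simp
  ultimately have "(\<lambda>j. 0::complex) \<longlonglongrightarrow> hadamard f g y" by simp
  then have "hadamard f g y = 0" by (simp add: LIMSEQ_const_iff)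
  moreover have "y \<in> cball 0 1" using ylim by simp
  ultimately show False using nz \<sigma>1(2) by blast
qed



lemma Pop_hol:
  assumes "g holomorphic_on ball 0 \<rho>" "\<And>z. z \<in> S \<Longrightarrow> norm (y*z) < \<rho>"
  shows "Pop y g holomorphic_on S"
proof -
  have "(g \<circ> (\<lambda>z. y*z)) holomorphic_on S"
    by (rule holomorphic_on_compose) (auto intro!: holomorphic_intros holomorphic_on_subset[OF assms(1)] simp: assms(2))
  then show ?thesis by (simp add: Pop_def o_def)
qed

lemma Pop_calA0_cl:
  assumes "g \<in> calA0" "norm y < 1"
  shows "Pop y g \<in> calA0_cl"
proof -
  have hol: "g holomorphic_on ball 0 1" "g 0 = 1" using assms(1) by (auto simp: calA0_def calA_def)
  show ?thesis
  proof (cases "y = 0")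
    case True
    have "Pop y g holomorphic_on ball 0 2" by (rule Pop_hol[OF hol(1)]) (simp add: True)
    then show ?thesis using hol by (auto simp: calA0_cl_def calA_cl_def Pop_def intro!: exI[of _ 2])
  next
    case False
    define R where "R = 1 / norm y"
    have R: "R > 1" using assms False by (simp add: R_def)
    have "Pop y g holomorphic_on ball 0 R"
    proof (rule Pop_hol[OF hol(1)])
      fix z :: complex assume "z \<in> ball 0 R"
      then have "norm z < 1 / norm y" by (simp add: R_def)
      then show "norm (y*z) < 1" using False by (simp add: norm_mult field_simps)
    qed
    then show ?thesis using hol R by (auto simp: calA0_cl_def calA_cl_def Pop_def)
  qed
qed

lemma dual_char:
  assumes "g \<in> calA0"
  shows "g \<in> dual U \<longleftrightarrow> (\<forall>y\<in>ball 0 1. Pop y g \<in> dualT U)"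
proof -
  have hol: "g holomorphic_on ball 0 1" using assms by (auto simp: calA0_def calA_def)
  have eq: "hadamard f (Pop y g) 1 = hadamard f g y" for f y
    using hadamard_Pop[OF hol, of f y 1] by simp
  show ?thesis using assms Pop_calA0_cl[OF assms]
    by (auto simp: dual_def dualT_def eq)
qed

lemma dual_eq_char: "dual U = {g \<in> calA0. \<forall>y\<in>ball 0 1. Pop y g \<in> dualT U}"
  using dual_char by (auto simp: dual_def)

lemma T_to_dual:
  assumes U: "U \<subseteq> calA0" "lu_compact U" and cU: "complete_set (dualT U)"
    and sub: "dual U \<subseteq> dual V" and g: "g \<in> dualT U"
  shows "g \<in> dualT V"
proof -
  obtain R where R: "R > 1" "g holomorphic_on ball 0 R" and g0: "g 0 = 1"
    using g by (auto simp: dualT_def calA0_cl_def calA_cl_def)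
  have R0: "R > 0" using R by simp
  have nz: "\<forall>f\<in>U. \<forall>y\<in>cball 0 1. hadamard f g y \<noteq> 0"
  proof (intro ballI)
    fix f y assume f: "f \<in> U" and y: "y \<in> cball (0::complex) 1"
    have "Pop y g \<in> dualT U" using cU g y unfolding complete_set_def by blast
    then have "hadamard f (Pop y g) 1 \<noteq> 0" using f by (auto simp: dualT_def)
    then show "hadamard f g y \<noteq> 0" using hadamard_Pop[OF R(2) R0, of f y 1] by simp
  qed
  obtain r where r: "r > 1" "r < R" and nzr: "\<forall>f\<in>U. \<forall>y\<in>ball 0 r. hadamard f g y \<noteq> 0"
    using zero_free[OF U R(2) R(1) nz] by blast
  define h where "h = Pop (of_real r) g"
  have hhol: "h holomorphic_on ball 0 1" unfolding h_def
  proof (rule Pop_hol[OF R(2)])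
    fix z :: complex assume "z \<in> ball 0 1"
    then have "norm z < 1" by simp
    then have a: "r * norm z < r * 1" using r by (intro mult_strict_left_mono) auto
    have b: "norm (of_real r * z) = r * norm z" using r by (simp add: norm_mult)
    show "norm (of_real r * z) < R" using a b r by linarith
  qed
  have hA: "h \<in> calA0" using hhol g0 by (simp add: calA0_def calA_def h_def Pop_def)
  have had: "hadamard f h z = hadamard f g (of_real r * z)" for f z
    unfolding h_def by (rule hadamard_Pop[OF R(2) R0])
  have "h \<in> dual U"
    unfolding dual_def
  proof (intro CollectI conjI hA ballI)
    fix f z assume f: "f \<in> U" and z: "z \<in> ball (0::complex) 1"
    have "norm (of_real r * z) < r"
    proof -
      have a: "r * norm z < r * 1" using r z by (intro mult_strict_left_mono) auto
      have b: "norm (of_real r * z) = r * norm z" using r by (simp add: norm_mult)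
      show ?thesis using a b by linarith
    qed
    then show "hadamard f h z \<noteq> 0" using nzr f by (simp add: had)
  qed
  then have hV: "h \<in> dual V" using sub by blast
  have "hadamard f g 1 \<noteq> 0" if f: "f \<in> V" for f
  proof -
    have "norm (of_real (1/r) :: complex) = 1/r" using r by (simp add: norm_divide)
    then have "of_real (1/r) \<in> ball (0::complex) 1" using r by simp
    then have "hadamard f h (of_real (1/r)) \<noteq> 0" using hV f by (auto simp: dual_def)
    moreover have "of_real r * of_real (1/r) = (1::complex)" using r
      by (simp flip: of_real_mult)
    ultimately show ?thesis by (simp add: had)
  qed
  then show ?thesis using g by (auto simp: dualT_def)
qed

lemma sub_dd: "X \<subseteq> calA0 \<Longrightarrow> X \<subseteq> dual (dual X)"
  by (auto simp: dual_def hadamard_commute)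

lemma dual_anti: "X \<subseteq> Y \<Longrightarrow> dual Y \<subseteq> dual X"
  by (auto simp: dual_def)

lemma ddd: "X \<subseteq> calA0 \<Longrightarrow> dual (dual (dual X)) = dual X"
proof
  assume "X \<subseteq> calA0"
  then show "dual (dual (dual X)) \<subseteq> dual X" by (intro dual_anti sub_dd)
  show "dual X \<subseteq> dual (dual (dual X))" by (rule sub_dd) (auto simp: dual_def)
qed

theorem corollary2:
  assumes "U \<subseteq> calA0" and "V \<subseteq> calA0"
    and "lu_compact U" and "lu_compact V"
    and "complete_set (dualT U)" and "complete_set (dualT V)"
  shows "(dual (dual U) = dual (dual V) \<longleftrightarrow> dualT U = dualT V)
       \<and> (dualT U = dualT V \<longleftrightarrow> dual U = dual V)"
proof -
  have ac: "dual (dual U) = dual (dual V) \<longleftrightarrow> dual U = dual V"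
    using ddd[OF assms(1)] ddd[OF assms(2)] by metis
  have bc: "dualT U = dualT V \<longleftrightarrow> dual U = dual V"
  proof
    assume "dualT U = dualT V"
    then show "dual U = dual V" by (simp add: dual_eq_char)
  next
    assume e: "dual U = dual V"
    show "dualT U = dualT V"
    proof
      show "dualT U \<subseteq> dualT V" using T_to_dual[OF assms(1,3,5)] e by blast
      show "dualT V \<subseteq> dualT U" using T_to_dual[OF assms(2,4,6)] e by blast
    qed
  qed
  show ?thesis using ac bc by blast
qed


end
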